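(* Let $\varphi$ be any forecasting system (not necessarily computable or non-degenerate) and $\omega\in\Omega$. If $\omega$ is Schnorr test random for $\varphi$, then $\omega$ is Schnorr random for $\varphi$.
   Context: Notation: $\mathbb N_0=\{0,1,\dots\}$; $\Omega=\{0,1\}^{\mathbb N}$; $\mathbb S$ finite binary strings, $\square$ empty string, $|s|$ length, $\omega^n$ first $n$ entries of $\omega$; $[s]=\{\omega:\omega^{|s|}=s\}$, $[A]=\bigcup_{s\in A}[s]$; for $A\subseteq\mathbb N_0\times\mathbb S$, $A_n=\{s:(n,s)\in A\}$, $A_n^{<\ell}=\{s\in A_n:|s|<\ell\}$. $\mathcal I$: nonempty closed subintervals of $[0,1]$; $\overline E_I(f)=\max_{p\in I}[pf(1)+(1-p)f(0)]$. Forecasting system: any $\varphi:\mathbb S\to\mathcal I$. Supermartingale for $\varphi$: $M:\mathbb S\to\mathbb R$ with $\overline E_{\varphi(s)}(M(s\,\cdot))\le M(s)$ for all $s$; test supermartingale: non-negative with $M(\square)=1$. $\overline P_\varphi(G)=\inf\{M(\square):M\text{ supermartingale for }\varphi,\ \liminf_nM(\omega^n)\ge\mathbb 1_G(\omega)\ \forall\omega\}$. A real map $r:\mathbb S\to\mathbb R$ is computable if there is a recursive $q:\mathbb S\times\mathbb N_0\to\mathbb Q$ with $|r(s)-q(s,N)|\le2^{-N}$. A growth function is a recursive, non-decreasing, unbounded $\rho:\mathbb N_0\to\mathbb N_0$. $\omega$ is Schnorr random for $\varphi$ if $\limsup_n[T(\omega^n)-\rho(n)]\le0$ for all computable test supermartingales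 $T$ for $\varphi$ and all growth functions $\rho$. A Schnorr test for $\varphi$ is a recursive $A\subseteq\mathbb N_0\times\mathbb S$ with $\overline P_\varphi([A_n])\le2^{-n}$ for all $n$ and a recursive $e:\mathbb N_0^2\to\mathbb N_0$ with $\overline P_\varphi([A_n]\setminus[A_n^{<\ell}])\le2^{-N}$ for all $(N,n)$ and all $\ell\ge e(N,n)$. $\omega$ is Schnorr test random if $\omega\notin\bigcap_n[A_n]$ for all Schnorr tests $A$ for $\varphi$. *)

theory Defs
  imports "HOL-Analysis.Analysis" "HOL-Library.Nat_Bijection"
begin

datatype recf =
    Zf
  | Sf
  | Proj nat
  | Comp recf "recf list"
  | Pr recf recf
  | Mn recf

inductive calc :: "recf \<Rightarrow> nat list \<Rightarrow> nat \<Rightarrow> bool" where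
  calc_zero: "calc Zf xs 0"
| calc_succ: "calc Sf (x # xs) (Suc x)"
| calc_proj: "i < length xs \<Longrightarrow> calc (Proj i) xs (xs ! i)"
| calc_comp: "list_all2 (\<lambda>g y. calc g xs y) gs ys \<Longrightarrow> calc f ys z \<Longrightarrow> calc (Comp f gs) xs z"
| calc_pr0: "calc f xs z \<Longrightarrow> calc (Pr f g) (0 # xs) z"
| calc_prS: "calc (Pr f g) (n # xs) y \<Longrightarrow> calc g (n # y # xs) z \<Longrightarrow> calc (Pr f g) (Suc n # xs) z"
| calc_mn: "calc f (n # xs) 0 \<Longrightarrow> (\<forall>m<n. \<exists>y. calc f (m # xs) (Suc y)) \<Longrightarrow> calc (Mn f) xs n"
monos list.rel_mono

definition recursive_fn :: "nat \<Rightarrow> (nat list \<Rightarrow> nat) \<Rightarrow> bool" where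
  "recursive_fn k f \<longleftrightarrow> (\<exists>c. \<forall>xs. length xs = k \<longrightarrow> calc c xs (f xs))"

text \<open>Bijective encoding of finite binary strings (True = 1, False = 0) as naturals.\<close>
fun str_enc :: "bool list \<Rightarrow> nat" where
  "str_enc [] = 0"
| "str_enc (b # s) = 2 * str_enc s + 1 + (if b then 1 else 0)"

definition rat_dec :: "nat \<Rightarrow> real" where
  "rat_dec m = (case prod_decode m of (a, b) \<Rightarrow> of_int (int_decode a) / of_nat (Suc b))"

definition computable_real_map :: "(bool list \<Rightarrow> real) \<Rightarrow> bool" where
  "computable_real_map r \<longleftrightarrow>
     (\<exists>h. recursive_fn 2 h \<and>
        (\<forall>s N. \<bar>r s - rat_dec (h [str_enc s, N])\<bar> \<le> (1/2) ^ N))"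

definition recursive_set :: "(nat \<times> bool list) set \<Rightarrow> bool" where
  "recursive_set A \<longleftrightarrow>
     recursive_fn 2 (\<lambda>xs. if (xs ! 0, inv str_enc (xs ! 1)) \<in> A then 1 else 0)"

definition recursive_fn2 :: "(nat \<Rightarrow> nat \<Rightarrow> nat) \<Rightarrow> bool" where
  "recursive_fn2 e \<longleftrightarrow> recursive_fn 2 (\<lambda>xs. e (xs ! 0) (xs ! 1))"

definition growth_function :: "(nat \<Rightarrow> nat) \<Rightarrow> bool" where
  "growth_function \<rho> \<longleftrightarrow> recursive_fn 1 (\<lambda>xs. \<rho> (xs ! 0)) \<and> mono \<rho> \<and> (\<forall>B. \<exists>n. \<rho> n > B)"

definition pfx :: "(nat \<Rightarrow> bool) \<Rightarrow> nat \<Rightarrow> bool list" where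
  "pfx \<omega> n = map \<omega> [0..<n]"

definition cyl :: "bool list set \<Rightarrow> (nat \<Rightarrow> bool) set" where
  "cyl S = {\<omega>. \<exists>s\<in>S. pfx \<omega> (length s) = s}"

definition sect :: "(nat \<times> bool list) set \<Rightarrow> nat \<Rightarrow> bool list set" where
  "sect A n = {s. (n, s) \<in> A}"

definition sect_lt :: "(nat \<times> bool list) set \<Rightarrow> nat \<Rightarrow> nat \<Rightarrow> bool list set" where
  "sect_lt A n l = {s. (n, s) \<in> A \<and> length s < l}"

definition is_interval :: "real set \<Rightarrow> bool" where
  "is_interval I \<longleftrightarrow> (\<exists>a b. 0 \<le> a \<and> a \<le> b \<and> b \<le> 1 \<and> I = {a..b})"

definition forecasting_system :: "(bool list \<Rightarrow> real set) \<Rightarrow> bool" where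
  "forecasting_system \<phi> \<longleftrightarrow> (\<forall>s. is_interval (\<phi> s))"

text \<open>Upper expectation (maximum is attained as I is compact and nonempty).\<close>
definition upper_E :: "real set \<Rightarrow> (bool \<Rightarrow> real) \<Rightarrow> real" where
  "upper_E I f = (SUP p\<in>I. p * f True + (1 - p) * f False)"

definition supermartingale :: "(bool list \<Rightarrow> real set) \<Rightarrow> (bool list \<Rightarrow> real) \<Rightarrow> bool" where
  "supermartingale \<phi> M \<longleftrightarrow> (\<forall>s. upper_E (\<phi> s) (\<lambda>x. M (s @ [x])) \<le> M s)"

definition test_supermartingale :: "(bool list \<Rightarrow> real set) \<Rightarrow> (bool list \<Rightarrow> real) \<Rightarrow> bool" where
  "test_supermartingale \<phi> T \<longleftrightarrow> supermartingale \<phi> T \<and> (\<forall>s. T s \<ge> 0) \<and> T [] = 1"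

definition upper_prob :: "(bool list \<Rightarrow> real set) \<Rightarrow> (nat \<Rightarrow> bool) set \<Rightarrow> ereal" where
  "upper_prob \<phi> G = Inf {ereal (M []) | M. supermartingale \<phi> M \<and>
      (\<forall>\<omega>. liminf (\<lambda>n. ereal (M (pfx \<omega> n))) \<ge> ereal (indicator G \<omega>))}"

definition schnorr_random :: "(bool list \<Rightarrow> real set) \<Rightarrow> (nat \<Rightarrow> bool) \<Rightarrow> bool" where
  "schnorr_random \<phi> \<omega> \<longleftrightarrow>
     (\<forall>T \<rho>. test_supermartingale \<phi> T \<and> computable_real_map T \<and> growth_function \<rho> \<longrightarrow>
        limsup (\<lambda>n. ereal (T (pfx \<omega> n) - real (\<rho> n))) \<le> 0)"

definition schnorr_test :: "(bool list \<Rightarrow> real set) \<Rightarrow> (nat \<times> bool list) set \<Rightarrow> bool" where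
  "schnorr_test \<phi> A \<longleftrightarrow> recursive_set A \<and>
     (\<forall>n. upper_prob \<phi> (cyl (sect A n)) \<le> ereal ((1/2) ^ n)) \<and>
     (\<exists>e. recursive_fn2 e \<and>
        (\<forall>N n l. l \<ge> e N n \<longrightarrow>
           upper_prob \<phi> (cyl (sect A n) - cyl (sect_lt A n l)) \<le> ereal ((1/2) ^ N)))"

definition schnorr_test_random :: "(bool list \<Rightarrow> real set) \<Rightarrow> (nat \<Rightarrow> bool) \<Rightarrow> bool" where
  "schnorr_test_random \<phi> \<omega> \<longleftrightarrow> (\<forall>A. schnorr_test \<phi> A \<longrightarrow> \<omega> \<notin> (\<Inter>n. cyl (sect A n)))"

end

theory Submission
  imports Defs
begin

lemma rf_ext: "recursive_fn k f \<Longrightarrow> (\<And>xs. length xs = k \<Longrightarrow> f xs = g xs) \<Longrightarrow> recursive_fn k g"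
  unfolding recursive_fn_def by metis

lemma rf_zero: "recursive_fn k (\<lambda>_. 0)"
  unfolding recursive_fn_def by (auto intro: calc_zero)

lemma rf_proj: "i < k \<Longrightarrow> recursive_fn k (\<lambda>xs. xs ! i)"
  unfolding recursive_fn_def by (auto intro: calc_proj)

lemma rf_suc: "recursive_fn k f \<Longrightarrow> recursive_fn k (\<lambda>xs. Suc (f xs))"
  unfolding recursive_fn_def
proof (elim exE)
  fix c assume c: "\<forall>xs. length xs = k \<longrightarrow> calc c xs (f xs)"
  show "\<exists>c. \<forall>xs. length xs = k \<longrightarrow> calc c xs (Suc (f xs))"
    using c by (intro exI[of _ "Comp Sf [c]"]) (auto intro!: calc_comp[where ys="[f _]"] calc_succ)
qed

lemma rf_const: "recursive_fn k (\<lambda>_. c)"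
  by (induction c) (auto intro: rf_zero rf_suc)

lemma codes_exist:
  assumes "\<forall>f\<in>set fs. recursive_fn k f"
  shows "\<exists>cs. list_all2 (\<lambda>f c. \<forall>xs. length xs = k \<longrightarrow> calc c xs (f xs)) fs cs"
  using assms
proof (induction fs)
  case Nil then show ?case by auto
next
  case (Cons f fs)
  then obtain cs where "list_all2 (\<lambda>f c. \<forall>xs. length xs = k \<longrightarrow> calc c xs (f xs)) fs cs" by auto
  moreover obtain c where "\<forall>xs. length xs = k \<longrightarrow> calc c xs (f xs)"
    using Cons.prems unfolding recursive_fn_def by auto
  ultimately show ?case by (intro exI[of _ "c # cs"]) auto
qed

lemma rf_comp:
  assumes g: "recursive_fn (length fs) g" and fs: "\<forall>f\<in>set fs. recursive_fn k f"
  shows "recursive_fn k (\<lambda>xs. g (map (\<lambda>f. f xs) fs))"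
proof -
  obtain cg where cg: "\<forall>ys. length ys = length fs \<longrightarrow> calc cg ys (g ys)"
    using g unfolding recursive_fn_def by auto
  obtain cs where cs: "list_all2 (\<lambda>f c. \<forall>xs. length xs = k \<longrightarrow> calc c xs (f xs)) fs cs"
    using codes_exist[OF fs] by auto
  have "calc (Comp cg cs) xs (g (map (\<lambda>f. f xs) fs))" if "length xs = k" for xs
  proof (rule calc_comp)
    show "list_all2 (\<lambda>g y. calc g xs y) cs (map (\<lambda>f. f xs) fs)"
      using cs that by (auto simp: list_all2_conv_all_nth)
    show "calc cg (map (\<lambda>f. f xs) fs) (g (map (\<lambda>f. f xs) fs))" using cg by auto
  qed
  then show ?thesis unfolding recursive_fn_def by auto
qed

lemma rf_comp1:
  assumes "recursive_fn 1 G" "recursive_fn k f"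
  shows "recursive_fn k (\<lambda>xs. G [f xs])"
  using rf_comp[of "[f]" G k] assms by simp

lemma rf_comp2:
  assumes "recursive_fn 2 G" "recursive_fn k f" "recursive_fn k g"
  shows "recursive_fn k (\<lambda>xs. G [f xs, g xs])"
  using rf_comp[of "[f,g]" G k] assms by (simp add: numeral_2_eq_2)

fun prec :: "(nat list \<Rightarrow> nat) \<Rightarrow> (nat list \<Rightarrow> nat) \<Rightarrow> nat \<Rightarrow> nat list \<Rightarrow> nat" where
  "prec f g 0 xs = f xs"
| "prec f g (Suc n) xs = g (n # prec f g n xs # xs)"

lemma rf_pr:
  assumes f: "recursive_fn k f" and g: "recursive_fn (Suc (Suc k)) g"
  shows "recursive_fn (Suc k) (\<lambda>xs. prec f g (hd xs) (tl xs))"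
proof -
  obtain cf where cf: "\<forall>ys. length ys = k \<longrightarrow> calc cf ys (f ys)"
    using f unfolding recursive_fn_def by auto
  obtain cg where cg: "\<forall>ys. length ys = Suc (Suc k) \<longrightarrow> calc cg ys (g ys)"
    using g unfolding recursive_fn_def by auto
  have *: "calc (Pr cf cg) (n # xs) (prec f g n xs)" if "length xs = k" for n xs
  proof (induction n)
    case 0 then show ?case using cf that by (auto intro: calc_pr0)
  next
    case (Suc n) then show ?case using cg that by (auto intro: calc_prS)
  qed
  show ?thesis unfolding recursive_fn_def
  proof (intro exI[of _ "Pr cf cg"] allI impI)
    fix xs :: "nat list" assume "length xs = Suc k"
    then obtain n ys where "xs = n # ys" "length ys = k" by (cases xs) auto
    then show "calc (Pr cf cg) xs (prec f g (hd xs) (tl xs))" using * by simp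
  qed
qed

lemma rf_mn:
  assumes p: "recursive_fn (Suc k) p" and ex: "\<And>xs. length xs = k \<Longrightarrow> \<exists>n. p (n # xs) = 0"
  shows "recursive_fn k (\<lambda>xs. LEAST n. p (n # xs) = 0)"
proof -
  obtain c where c: "\<forall>ys. length ys = Suc k \<longrightarrow> calc c ys (p ys)"
    using p unfolding recursive_fn_def by auto
  have "calc (Mn c) xs (LEAST n. p (n # xs) = 0)" if "length xs = k" for xs
  proof (rule calc_mn)
    have "p ((LEAST n. p (n # xs) = 0) # xs) = 0" using ex[OF that] by (rule LeastI_ex)
    then show "calc c ((LEAST n. p (n # xs) = 0) # xs) 0" using c that by (metis length_Cons)
    show "\<forall>m<(LEAST n. p (n # xs) = 0). \<exists>y. calc c (m # xs) (Suc y)"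
    proof (intro allI impI)
      fix m assume "m < (LEAST n. p (n # xs) = 0)"
      then have "p (m # xs) \<noteq> 0" by (rule not_less_Least)
      then obtain y where "p (m # xs) = Suc y" using not0_implies_Suc by blast
      then show "\<exists>y. calc c (m # xs) (Suc y)" using c that by (metis length_Cons)
    qed
  qed
  then show ?thesis unfolding recursive_fn_def by auto
qed

lemma len2: "length xs = 2 \<Longrightarrow> xs = [xs!0, xs!1]"
  by (cases xs; cases "tl xs") auto
lemma len1: "length xs = 1 \<Longrightarrow> xs = [xs!0]"
  by (cases xs) auto

lemma rf_pr_eq:
  assumes "recursive_fn k f" "recursive_fn (Suc (Suc k)) g"
    and "\<And>n ys. length ys = k \<Longrightarrow> prec f g n ys = H (n # ys)"
  shows "recursive_fn (Suc k) H"
  using rf_pr[OF assms(1,2)]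
proof (rule rf_ext)
  fix xs :: "nat list" assume "length xs = Suc k"
  then obtain n ys where "xs = n # ys" "length ys = k" by (cases xs) auto
  then show "prec f g (hd xs) (tl xs) = H xs" using assms(3) by simp
qed

lemma add2: "recursive_fn 2 (\<lambda>xs. xs!0 + xs!1)"
proof -
  have "recursive_fn (Suc 1) (\<lambda>xs. xs!0 + xs!1)"
  proof (rule rf_pr_eq)
    show "recursive_fn 1 (\<lambda>ys. ys!0)" by (rule rf_proj) auto
    show "recursive_fn (Suc (Suc 1)) (\<lambda>ys. Suc (ys!1))" by (intro rf_suc rf_proj) auto
    show "prec (\<lambda>ys. ys!0) (\<lambda>ys. Suc (ys!1)) n ys = (n # ys)!0 + (n#ys)!1" if "length ys = 1" for n ys
      by (induction n) auto
  qed
  then show ?thesis by (simp add: numeral_2_eq_2)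
qed


lemma rf_add: "recursive_fn k f \<Longrightarrow> recursive_fn k g \<Longrightarrow> recursive_fn k (\<lambda>xs. f xs + g xs)"
  using rf_comp2[OF add2] by simp

lemma mult2: "recursive_fn 2 (\<lambda>xs. xs!0 * xs!1)"
proof -
  have "recursive_fn (Suc 1) (\<lambda>xs. xs!0 * xs!1)"
  proof (rule rf_pr_eq)
    show "recursive_fn 1 (\<lambda>ys. 0)" by (rule rf_zero)
    show "recursive_fn (Suc (Suc 1)) (\<lambda>ys. ys!1 + ys!2)" by (intro rf_add rf_proj) auto
    show "prec (\<lambda>ys. 0) (\<lambda>ys. ys!1 + ys!2) n ys = (n # ys)!0 * (n#ys)!1" if "length ys = 1" for n ys
      by (induction n) (auto simp: numeral_2_eq_2)
  qed
  then show ?thesis by (simp add: numeral_2_eq_2)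
qed

lemma rf_mult: "recursive_fn k f \<Longrightarrow> recursive_fn k g \<Longrightarrow> recursive_fn k (\<lambda>xs. f xs * g xs)"
  using rf_comp2[OF mult2] by simp

lemma pred1: "recursive_fn 1 (\<lambda>xs. xs!0 - 1)"
proof -
  have "recursive_fn (Suc 0) (\<lambda>xs. xs!0 - 1)"
  proof (rule rf_pr_eq)
    show "recursive_fn 0 (\<lambda>ys. 0)" by (rule rf_zero)
    show "recursive_fn (Suc (Suc 0)) (\<lambda>ys. ys!0)" by (rule rf_proj) auto
    show "prec (\<lambda>ys. 0) (\<lambda>ys. ys!0) n ys = (n # ys)!0 - 1" if "length ys = 0" for n ys
      by (cases n) auto
  qed
  then show ?thesis by simp
qed

lemma monus2: "recursive_fn 2 (\<lambda>xs. xs!1 - xs!0)"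
proof -
  have "recursive_fn (Suc 1) (\<lambda>xs. xs!1 - xs!0)"
  proof (rule rf_pr_eq)
    show "recursive_fn 1 (\<lambda>ys. ys!0)" by (rule rf_proj) auto
    show "recursive_fn (Suc (Suc 1)) (\<lambda>ys. [ys!1]!0 - 1)" by (intro rf_comp1[OF pred1] rf_proj) auto
    show "prec (\<lambda>ys. ys!0) (\<lambda>ys. [ys!1]!0 - 1) n ys = (n # ys)!1 - (n#ys)!0" if "length ys = 1" for n ys
      by (induction n) auto
  qed
  then show ?thesis by (simp add: numeral_2_eq_2)
qed

lemma rf_sub: "recursive_fn k f \<Longrightarrow> recursive_fn k g \<Longrightarrow> recursive_fn k (\<lambda>xs. f xs - g xs)"
  using rf_comp2[OF monus2, of k g f] by simp

lemma pow2_1: "recursive_fn 1 (\<lambda>xs. 2 ^ (xs!0))"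
proof -
  have "recursive_fn (Suc 0) (\<lambda>xs. 2 ^ (xs!0))"
  proof (rule rf_pr_eq)
    show "recursive_fn 0 (\<lambda>ys. 1)" by (rule rf_const)
    show "recursive_fn (Suc (Suc 0)) (\<lambda>ys. ys!1 + ys!1)" by (intro rf_add rf_proj) auto
    show "prec (\<lambda>ys. 1) (\<lambda>ys. ys!1 + ys!1) n ys = 2 ^ ((n # ys)!0)" if "length ys = 0" for n ys
      by (induction n) auto
  qed
  then show ?thesis by simp
qed

lemma rf_pow2: "recursive_fn k f \<Longrightarrow> recursive_fn k (\<lambda>xs. 2 ^ f xs)"
  using rf_comp1[OF pow2_1] by simp

lemma mod2_1: "recursive_fn 1 (\<lambda>xs. (xs!0) mod 2)"
proof -
  have "recursive_fn (Suc 0) (\<lambda>xs. (xs!0) mod 2)"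
  proof (rule rf_pr_eq)
    show "recursive_fn 0 (\<lambda>ys. 0)" by (rule rf_zero)
    show "recursive_fn (Suc (Suc 0)) (\<lambda>ys. 1 - ys!1)" by (intro rf_sub rf_proj rf_const) auto
    show "prec (\<lambda>ys. 0) (\<lambda>ys. 1 - ys!1) n ys = ((n # ys)!0) mod 2" if "length ys = 0" for n ys
      by (induction n) (auto simp: mod_Suc)
  qed
  then show ?thesis by simp
qed

lemma rf_mod2: "recursive_fn k f \<Longrightarrow> recursive_fn k (\<lambda>xs. f xs mod 2)"
  using rf_comp1[OF mod2_1] by simp


definition Lf :: "nat \<Rightarrow> nat" where "Lf x = (LEAST k. (x+2) - 2^(k+1) = 0)"
definition Kf :: "nat \<Rightarrow> nat" where "Kf m = (LEAST k. (2*m+2) - (k+1)*(k+2) = 0)"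
definition Af :: "nat \<Rightarrow> nat \<Rightarrow> nat" where "Af m k = (LEAST a. 2*m - (2*a + k*(k+1)) = 0)"

lemma rf_Lf: "recursive_fn 1 (\<lambda>xs. Lf (xs!0))"
proof -
  have "recursive_fn 1 (\<lambda>xs. LEAST n. (\<lambda>ys. (ys!1 + 2) - 2^(ys!0 + 1)) (n # xs) = 0)"
  proof (rule rf_mn)
    show "recursive_fn (Suc 1) (\<lambda>ys. (ys!1 + 2) - 2^(ys!0 + 1))"
      by (intro rf_sub rf_add rf_pow2 rf_proj rf_const) auto
    fix xs :: "nat list"
    have "xs!0 + 2 \<le> 2 ^ (xs!0 + 2)"
      using less_exp[of "xs!0+2"] by simp
    then show "\<exists>n. (\<lambda>ys. (ys!1 + 2) - 2^(ys!0 + 1)) (n # xs) = 0"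
      by (intro exI[of _ "xs!0 + 1"]) auto
  qed
  then show ?thesis by (simp add: Lf_def[abs_def])
qed

lemma rf_Kf: "recursive_fn 1 (\<lambda>xs. Kf (xs!0))"
proof -
  have "recursive_fn 1 (\<lambda>xs. LEAST n. (\<lambda>ys. (2*ys!1 + 2) - (ys!0+1)*(ys!0+2)) (n # xs) = 0)"
  proof (rule rf_mn)
    show "recursive_fn (Suc 1) (\<lambda>ys. (2*ys!1 + 2) - (ys!0+1)*(ys!0+2))"
      by (intro rf_sub rf_add rf_mult rf_proj rf_const) auto
    fix xs :: "nat list"
    have "2*xs!0 + 2 \<le> (2*xs!0+1)*(2*xs!0+2)" by simp
    then show "\<exists>n. (\<lambda>ys. (2*ys!1 + 2) - (ys!0+1)*(ys!0+2)) (n # xs) = 0"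
      by (intro exI[of _ "2*xs!0"]) auto
  qed
  then show ?thesis by (simp add: Kf_def[abs_def])
qed

lemma rf_Af: "recursive_fn 2 (\<lambda>xs. Af (xs!0) (xs!1))"
proof -
  have "recursive_fn 2 (\<lambda>xs. LEAST n. (\<lambda>ys. 2*ys!1 - (2*ys!0 + ys!2*(ys!2+1))) (n # xs) = 0)"
  proof (rule rf_mn)
    show "recursive_fn (Suc 2) (\<lambda>ys. 2*ys!1 - (2*ys!0 + ys!2*(ys!2+1)))"
      by (intro rf_sub rf_add rf_mult rf_proj rf_const) auto
    fix xs :: "nat list"
    show "\<exists>n. (\<lambda>ys. 2*ys!1 - (2*ys!0 + ys!2*(ys!2+1))) (n # xs) = 0"
      by (intro exI[of _ "xs!0"]) auto
  qed
  then show ?thesis by (simp add: Af_def numeral_2_eq_2)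
qed

lemma str_enc_bounds: "2 ^ length s \<le> str_enc s + 1 \<and> str_enc s + 2 \<le> 2 ^ (length s + 1)"
  by (induction s) auto

lemma par_ne: "2*(a::nat) \<noteq> Suc (2*b)" by presburger

lemma str_enc_inj: "inj str_enc"
proof (rule injI)
  fix s t show "str_enc s = str_enc t \<Longrightarrow> s = t"
  proof (induction s arbitrary: t)
    case Nil then show ?case by (cases t) auto
  next
    case (Cons a s) then show ?case by (cases t) (auto split: if_splits simp: par_ne par_ne[symmetric])
  qed
qed

lemma str_enc_surj: "\<exists>s. str_enc s = x"
proof (induction x rule: less_induct)
  case (less x)
  show ?case
  proof (cases "x = 0")
    case True then show ?thesis by (intro exI[of _ "[]"]) auto
  next
    case False
    show ?thesis
    proof (cases "even x")
      case True
      define y where "y = (x - 2) div 2"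
      have y: "x = 2*y + 2" using True False unfolding y_def by presburger
      then have "y < x" by simp
      then obtain s where "str_enc s = y" using less by blast
      then show ?thesis using y by (intro exI[of _ "True # s"]) auto
    next
      case odd: False
      define y where "y = x div 2"
      have y: "x = 2*y + 1" using odd unfolding y_def by presburger
      then have "y < x" by simp
      then obtain s where "str_enc s = y" using less by blast
      then show ?thesis using y by (intro exI[of _ "False # s"]) auto
    qed
  qed
qed

lemma str_enc_inv: "str_enc (inv str_enc x) = x"
  by (metis f_inv_into_f range_eqI str_enc_surj)

lemma Lf_enc: "Lf (str_enc s) = length s"
  unfolding Lf_def
proof (rule Least_equality)
  show "str_enc s + 2 - 2 ^ (length s + 1) = 0" using str_enc_bounds[of s] by simp
  fix k assume "str_enc s + 2 - 2 ^ (k + 1) = 0"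
  then have "str_enc s + 2 \<le> 2 ^ (k+1)" by simp
  then have "(2::nat) ^ length s < 2 ^ (k+1)" using str_enc_bounds[of s] by simp
  then have "length s < k+1" by (rule power_less_imp_less_exp[rotated]) simp
  then show "length s \<le> k" by simp
qed

lemma tri2: "2 * triangle k = k * (k+1)"
  by (induction k) auto

lemma Kf_enc: "Kf (prod_encode (a,b)) = a + b"
  unfolding Kf_def
proof (rule Least_equality)
  have "2 * prod_encode (a,b) = (a+b)*(a+b+1) + 2*a" by (simp add: prod_encode_def tri2 algebra_simps)
  then show "2 * prod_encode (a, b) + 2 - (a + b + 1) * (a + b + 2) = 0" by (simp add: algebra_simps)
  fix k assume "2 * prod_encode (a, b) + 2 - (k + 1) * (k + 2) = 0"
  then have h: "2 * prod_encode (a, b) + 2 \<le> (k + 1) * (k + 2)" by simp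
  show "a + b \<le> k"
  proof (rule ccontr)
    assume "\<not> a + b \<le> k"
    then have "k + 1 \<le> a + b" by simp
    then have "(k+1)*(k+2) \<le> (a+b)*(a+b+1)" by (intro mult_le_mono) auto
    moreover have "2 * prod_encode (a,b) = (a+b)*(a+b+1) + 2*a" by (simp add: prod_encode_def tri2 algebra_simps)
    ultimately show False using h by simp
  qed
qed

lemma Af_enc: "Af (prod_encode (a,b)) (a+b) = a"
  unfolding Af_def
proof (rule Least_equality)
  have e: "2 * prod_encode (a,b) = (a+b)*(a+b+1) + 2*a" by (simp add: prod_encode_def tri2 algebra_simps)
  then show "2 * prod_encode (a, b) - (2 * a + (a + b) * (a + b + 1)) = 0" by simp
  fix y assume "2 * prod_encode (a, b) - (2 * y + (a + b) * (a + b + 1)) = 0"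
  then show "a \<le> y" using e by simp
qed


definition Aset :: "(nat list \<Rightarrow> nat) \<Rightarrow> (nat \<Rightarrow> nat) \<Rightarrow> (nat \<times> bool list) set" where
  "Aset h \<rho> = {(n,s). even (fst (prod_decode (h [str_enc s, 2]))) \<and>
      2 * \<rho> (length s) * (snd (prod_decode (h [str_enc s, 2])) + 1)
        \<le> fst (prod_decode (h [str_enc s, 2])) + snd (prod_decode (h [str_enc s, 2])) + 1
      \<and> 2^n + 1 \<le> \<rho> (length s)}"

lemma ind_le: "(1 - ((x::nat) - y)) = (if x \<le> y then 1 else 0)" by auto
lemma ind_even: "(1 - (x::nat) mod 2) = (if even x then 1 else 0)" by presburger

lemma rec_Aset:
  assumes h: "recursive_fn 2 h" and r: "recursive_fn 1 (\<lambda>xs. \<rho> (xs!0))"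
  shows "recursive_set (Aset h \<rho>)"
proof -
  define R where "R xs = \<rho> (Lf (xs!1))" for xs :: "nat list"
  define M where "M xs = h [xs!1, 2]" for xs :: "nat list"
  define K where "K xs = Kf (M xs)" for xs
  define Am where "Am xs = Af (M xs) (K xs)" for xs
  define Bm where "Bm xs = K xs - Am xs" for xs
  have rL: "recursive_fn 2 (\<lambda>xs. Lf (xs!1))" using rf_comp1[OF rf_Lf rf_proj[of 1 2]] by simp
  have rR: "recursive_fn 2 R" using rf_comp1[OF r rL] by (simp add: R_def[abs_def])
  have rM: "recursive_fn 2 M" using rf_comp2[OF h rf_proj[of 1 2] rf_const[of 2 2]] by (simp add: M_def[abs_def])
  have rK: "recursive_fn 2 K" using rf_comp1[OF rf_Kf rM] by (simp add: K_def[abs_def])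
  have rA: "recursive_fn 2 Am" using rf_comp2[OF rf_Af rM rK] by (simp add: Am_def[abs_def])
  have rB: "recursive_fn 2 Bm" using rf_sub[OF rK rA] by (simp add: Bm_def[abs_def])
  have main: "recursive_fn 2 (\<lambda>xs. (1 - Am xs mod 2) * (1 - (2 * R xs * (Bm xs + 1) - (Am xs + Bm xs + 1)))
       * (1 - ((2 ^ (xs!0) + 1) - R xs)))"
    by (intro rf_mult rf_sub rf_const rf_mod2 rf_add rf_pow2 rf_proj rA rB rR) auto
  show ?thesis unfolding recursive_set_def
  proof (rule rf_ext[OF main])
    fix xs :: "nat list" assume "length xs = 2"
    then obtain n x where xs: "xs = [n, x]" by (metis len2)
    define s where "s = inv str_enc x"
    have sx: "str_enc s = x" unfolding s_def by (rule str_enc_inv)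
    obtain a b where ab: "prod_decode (h [x, 2]) = (a, b)" by fastforce
    have m: "h [x,2] = prod_encode (a,b)" by (metis ab prod_decode_inverse)
    have kk: "K xs = a + b" by (simp add: K_def M_def xs m Kf_enc)
    moreover have "Am xs = a" unfolding Am_def kk by (simp add: M_def xs m Af_enc)
    ultimately have "Bm xs = b" by (simp add: Bm_def[abs_def])
    moreover have "R xs = \<rho> (length s)" by (simp add: R_def xs Lf_enc sx[symmetric])
    moreover have "M xs = h [x, 2]" by (simp add: M_def xs)
    ultimately have e1: "1 - Am xs mod 2 = (if even a then 1 else 0)"
      and e2: "1 - (2 * R xs * (Bm xs + 1) - (Am xs + Bm xs + 1)) = (if 2 * \<rho> (length s) * (b+1) \<le> a+b+1 then 1 else 0)"
      and e3: "1 - ((2 ^ (xs!0) + 1) - R xs) = (if 2^n + 1 \<le> \<rho> (length s) then 1 else 0)"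
      using \<open>Am xs = a\<close> by (simp_all only: ind_le ind_even xs nth_Cons_0)
    show "(1 - Am xs mod 2) * (1 - (2 * R xs * (Bm xs + 1) - (Am xs + Bm xs + 1)))
       * (1 - ((2 ^ (xs!0) + 1) - R xs)) = (if (xs!0, inv str_enc (xs!1)) \<in> Aset h \<rho> then 1 else 0)"
      unfolding e1 e2 e3 by (simp add: xs s_def[symmetric] Aset_def sx ab)
  qed
qed

lemma rec_e:
  assumes r: "recursive_fn 1 (\<lambda>xs. \<rho> (xs!0))" and unb: "\<forall>B. \<exists>n. \<rho> n > B"
  shows "recursive_fn2 (\<lambda>N n. LEAST l. (2^N + 1) - \<rho> l = 0)"
proof -
  have "recursive_fn 2 (\<lambda>xs. LEAST l. (\<lambda>ys. (2^(ys!1) + 1) - \<rho> (ys!0)) (l # xs) = 0)"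
  proof (rule rf_mn)
    have "recursive_fn 3 (\<lambda>ys. \<rho> (ys!0))" using rf_comp1[OF r rf_proj[of 0 3]] by simp
    then show "recursive_fn (Suc 2) (\<lambda>ys. (2^(ys!1) + 1) - \<rho> (ys!0))"
      by (intro rf_sub rf_add rf_pow2 rf_proj rf_const) (auto simp: numeral_3_eq_3)
    fix xs :: "nat list"
    obtain l where "\<rho> l > 2^(xs!0)" using unb by blast
    then show "\<exists>l. (\<lambda>ys. (2^(ys!1) + 1) - \<rho> (ys!0)) (l # xs) = 0" by (intro exI[of _ l]) auto
  qed
  then show ?thesis unfolding recursive_fn2_def by simp
qed


lemma upper_E_interval:
  assumes "a \<le> b"
  shows "upper_E {a..b} f = max (a * f True + (1-a) * f False) (b * f True + (1-b) * f False)"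
  unfolding upper_E_def
proof (rule cSup_eq_maximum)
  show "max (a * f True + (1-a) * f False) (b * f True + (1-b) * f False)
      \<in> (\<lambda>p. p * f True + (1 - p) * f False) ` {a..b}"
    using assms by (auto simp: max_def)
  fix y assume "y \<in> (\<lambda>p. p * f True + (1 - p) * f False) ` {a..b}"
  then obtain p where p: "a \<le> p" "p \<le> b" "y = p * f True + (1 - p) * f False" by auto
  have y: "y = f False + p * (f True - f False)" using p by (simp add: algebra_simps)
  show "y \<le> max (a * f True + (1-a) * f False) (b * f True + (1-b) * f False)"
  proof (cases "f True - f False \<ge> 0")
    case True
    then have "p * (f True - f False) \<le> b * (f True - f False)" using p by (intro mult_right_mono)
    then show ?thesis using y by (simp add: algebra_simps max_def)
  next
    case False
    then have "a * (f True - f False) \<ge> p * (f True - f False)" using p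
      by (intro mult_right_mono_neg) auto
    then show ?thesis using y by (simp add: algebra_simps max_def)
  qed
qed

lemma fs_interval:
  assumes "forecasting_system \<phi>"
  obtains a b where "a \<le> b" "\<phi> s = {a..b}"
  using assms unfolding forecasting_system_def is_interval_def by blast

lemma upper_E_const:
  assumes "forecasting_system \<phi>"
  shows "upper_E (\<phi> s) (\<lambda>x. K) = K"
proof -
  obtain a b where "a \<le> b" "\<phi> s = {a..b}" using fs_interval[OF assms] .
  then show ?thesis by (simp add: upper_E_interval algebra_simps)
qed

lemma upper_E_scale:
  assumes "forecasting_system \<phi>" "c > 0" "upper_E (\<phi> s) f \<le> K"
  shows "upper_E (\<phi> s) (\<lambda>x. f x / c) \<le> K / c"
proof -
  obtain a b where ab: "a \<le> b" "\<phi> s = {a..b}" using fs_interval[OF assms(1)] .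
  have 1: "a * f True + (1-a) * f False \<le> K" and 2: "b * f True + (1-b) * f False \<le> K"
    using assms(3) by (auto simp: ab upper_E_interval)
  have "a * (f True / c) + (1-a) * (f False / c) = (a * f True + (1-a) * f False) / c"
    and "b * (f True / c) + (1-b) * (f False / c) = (b * f True + (1-b) * f False) / c"
    using assms(2) by (simp_all add: field_simps)
  moreover have "(a * f True + (1-a) * f False) / c \<le> K / c" "(b * f True + (1-b) * f False) / c \<le> K / c"
    using 1 2 assms(2) by (simp_all add: divide_right_mono)
  ultimately show ?thesis by (simp add: ab upper_E_interval)
qed

definition hit :: "bool list set \<Rightarrow> bool list \<Rightarrow> bool" where
  "hit S s \<longleftrightarrow> (\<exists>j \<le> length s. take j s \<in> S)"

definition stp :: "bool list set \<Rightarrow> bool list \<Rightarrow> bool list" where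
  "stp S s = (if hit S s then take (LEAST j. take j s \<in> S) s else s)"

lemma hit_least:
  assumes "hit S s"
  shows "(LEAST j. take j s \<in> S) \<le> length s" "take (LEAST j. take j s \<in> S) s \<in> S"
proof -
  obtain j where j: "j \<le> length s" "take j s \<in> S" using assms unfolding hit_def by auto
  show "(LEAST j. take j s \<in> S) \<le> length s" using Least_le[of "\<lambda>j. take j s \<in> S", OF j(2)] j(1) by simp
  show "take (LEAST j. take j s \<in> S) s \<in> S" using j(2) by (rule LeastI)
qed

lemma stp_hit: "hit S s \<Longrightarrow> stp S (s @ [x]) = stp S s"
proof -
  assume h: "hit S s"
  define j0 where "j0 = (LEAST j. take j s \<in> S)"
  have j0: "j0 \<le> length s" "take j0 s \<in> S" using hit_least[OF h] by (simp_all add: j0_def)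
  have h2: "hit S (s @ [x])" using j0 unfolding hit_def by (intro exI[of _ j0]) auto
  have "(LEAST j. take j (s @ [x]) \<in> S) = j0"
  proof (rule Least_equality)
    show "take j0 (s @ [x]) \<in> S" using j0 by simp
    fix j assume j: "take j (s @ [x]) \<in> S"
    show "j0 \<le> j"
    proof (rule ccontr)
      assume "\<not> j0 \<le> j"
      then have "j < j0" by simp
      then have "take j s \<in> S" using j j0(1) by simp
      then show False using \<open>j < j0\<close> not_less_Least unfolding j0_def by blast
    qed
  qed
  then show ?thesis using h h2 j0 by (simp add: stp_def j0_def)
qed

lemma stp_nohit: "\<not> hit S s \<Longrightarrow> stp S (s @ [x]) = s @ [x]"
proof -
  assume nh: "\<not> hit S s"
  show ?thesis
  proof (cases "hit S (s @ [x])")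
    case False then show ?thesis by (simp add: stp_def)
  next
    case True
    have le: "(LEAST j. take j (s @ [x]) \<in> S) \<le> length s + 1" and
      m: "take (LEAST j. take j (s @ [x]) \<in> S) (s @ [x]) \<in> S"
      using hit_least[OF True] by simp_all
    have "\<not> (LEAST j. take j (s @ [x]) \<in> S) \<le> length s"
    proof
      assume "(LEAST j. take j (s @ [x]) \<in> S) \<le> length s"
      then show False using nh m unfolding hit_def by auto
    qed
    then have "(LEAST j. take j (s @ [x]) \<in> S) = length s + 1" using le by simp
    then show ?thesis using True by (simp add: stp_def)
  qed
qed

lemma pfx_take: "k \<le> n \<Longrightarrow> take k (pfx \<omega> n) = pfx \<omega> k"
  by (simp add: pfx_def take_map min_def)

lemma length_pfx[simp]: "length (pfx \<omega> n) = n"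
  by (simp add: pfx_def)

lemma ville:
  assumes fs: "forecasting_system \<phi>" and T: "test_supermartingale \<phi> T" and c: "c > 0"
    and S: "\<forall>s\<in>S. T s \<ge> c" and G: "G \<subseteq> cyl S"
  shows "upper_prob \<phi> G \<le> ereal (1/c)"
proof -
  define M where "M s = T (stp S s) / c" for s
  have Tnn: "T s \<ge> 0" for s using T unfolding test_supermartingale_def by auto
  have Tsup: "upper_E (\<phi> s) (\<lambda>x. T (s @ [x])) \<le> T s" for s
    using T unfolding test_supermartingale_def supermartingale_def by auto
  have sup: "supermartingale \<phi> M" unfolding supermartingale_def
  proof
    fix s
    show "upper_E (\<phi> s) (\<lambda>x. M (s @ [x])) \<le> M s"
    proof (cases "hit S s")
      case True
      then show ?thesis by (simp add: M_def stp_hit upper_E_const[OF fs])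
    next
      case False
      then have "M (s @ [x]) = T (s @ [x]) / c" for x by (simp add: M_def stp_nohit)
      moreover have "M s = T s / c" using False by (simp add: M_def stp_def)
      ultimately show ?thesis using upper_E_scale[OF fs c Tsup] by simp
    qed
  qed
  have Mnn: "M s \<ge> 0" for s using Tnn c by (simp add: M_def)
  have lim: "liminf (\<lambda>n. ereal (M (pfx \<omega> n))) \<ge> ereal (indicator G \<omega>)" for \<omega>
  proof (cases "\<omega> \<in> G")
    case True
    then obtain s where s: "s \<in> S" "pfx \<omega> (length s) = s" using G unfolding cyl_def by auto
    have "eventually (\<lambda>n. ereal 1 \<le> ereal (M (pfx \<omega> n))) sequentially"
      unfolding eventually_sequentially
    proof (intro exI allI impI)
      fix n assume n: "length s \<le> n"
      have h: "hit S (pfx \<omega> n)" unfolding hit_def using s n pfx_take[OF n]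
        by (intro exI[of _ "length s"]) auto
      then have "T (stp S (pfx \<omega> n)) \<ge> c" using S hit_least[OF h] by (simp add: stp_def)
      then show "ereal 1 \<le> ereal (M (pfx \<omega> n))" using c by (simp add: M_def)
    qed
    then show ?thesis using True by (simp add: Liminf_bounded)
  next
    case False
    have "eventually (\<lambda>n. ereal 0 \<le> ereal (M (pfx \<omega> n))) sequentially" using Mnn by simp
    then show ?thesis using False by (simp add: Liminf_bounded)
  qed
  have "upper_prob \<phi> G \<le> ereal (M [])" unfolding upper_prob_def
    by (rule Inf_lower) (use sup lim in blast)
  moreover have "M [] = 1 / c" using T by (simp add: M_def stp_def hit_def test_supermartingale_def)
  ultimately show ?thesis by simp
qed


lemma int_decode_alt: "int_decode a = (if even a then int (a div 2) else - int (a div 2) - 1)"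
  by (simp add: int_decode_def sum_decode_def)

lemma dec_cond:
  assumes r: "(r::nat) \<ge> 1"
  shows "(even a \<and> 2 * r * (b + 1) \<le> a + b + 1) \<longleftrightarrow>
         of_int (int_decode a) / of_nat (Suc b) \<ge> real r - 1/2"
proof (cases "even a")
  case True
  then obtain k where a: "a = 2 * k" by blast
  have "(2 * r * (b + 1) \<le> a + b + 1) \<longleftrightarrow> real (2 * r * (b + 1)) \<le> real (2*k + b + 1)"
    unfolding a by linarith
  also have "\<dots> \<longleftrightarrow> (real r - 1/2) * real (Suc b) \<le> real k"
  proof -
    have E: "(real r - 1/2) * real (Suc b) = (real (2 * r * (b + 1)) - real (b+1)) / 2"
      by (simp add: algebra_simps)
    show ?thesis unfolding E by (simp del: of_nat_Suc of_nat_add of_nat_mult) linarith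
  qed
  also have "\<dots> \<longleftrightarrow> real r - 1/2 \<le> real k / real (Suc b)"
    by (simp add: pos_le_divide_eq del: of_nat_Suc)
  finally show ?thesis using True by (simp add: int_decode_alt a del: of_nat_Suc)
next
  case False
  have "of_int (int_decode a) / real (Suc b) < 0"
    using False by (simp add: int_decode_alt divide_neg_pos del: of_nat_Suc)
  moreover have "real r - 1/2 > 0" using r by simp
  ultimately show ?thesis using False by simp
qed

lemma Aset_iff:
  assumes "2^n + 1 \<le> \<rho> (length s)"
  shows "(n, s) \<in> Aset h \<rho> \<longleftrightarrow> rat_dec (h [str_enc s, 2]) \<ge> real (\<rho> (length s)) - 1/2"
proof -
  obtain a b where ab: "prod_decode (h [str_enc s, 2]) = (a, b)" by fastforce
  have "\<rho> (length s) \<ge> 1" using assms by simp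
  then show ?thesis using assms dec_cond[of "\<rho> (length s)" a b]
    by (simp add: Aset_def ab rat_dec_def del: of_nat_Suc)
qed

lemma Aset_bound:
  assumes "(n, s) \<in> Aset h \<rho>"
  shows "2^n + 1 \<le> \<rho> (length s)" "rat_dec (h [str_enc s, 2]) \<ge> real (\<rho> (length s)) - 1/2"
proof -
  show 1: "2^n + 1 \<le> \<rho> (length s)" using assms by (simp add: Aset_def)
  show "rat_dec (h [str_enc s, 2]) \<ge> real (\<rho> (length s)) - 1/2" using assms Aset_iff[where n=n and s=s and \<rho>=\<rho> and h=h] 1 by simp
qed

theorem proposition8p1:
  fixes \<phi> :: "bool list \<Rightarrow> real set" and \<omega> :: "nat \<Rightarrow> bool"
  assumes "forecasting_system \<phi>"
    and "schnorr_test_random \<phi> \<omega>"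
  shows "schnorr_random \<phi> \<omega>"
proof (rule ccontr)
  assume "\<not> schnorr_random \<phi> \<omega>"
  then obtain T \<rho> where T: "test_supermartingale \<phi> T" and cT: "computable_real_map T"
    and g: "growth_function \<rho>" and ls: "\<not> limsup (\<lambda>n. ereal (T (pfx \<omega> n) - real (\<rho> n))) \<le> 0"
    unfolding schnorr_random_def by blast
  obtain h where h: "recursive_fn 2 h" and happ: "\<And>s N. \<bar>T s - rat_dec (h [str_enc s, N])\<bar> \<le> (1/2) ^ N"
    using cT unfolding computable_real_map_def by blast
  have rr: "recursive_fn 1 (\<lambda>xs. \<rho> (xs!0))" and mono: "mono \<rho>" and unb: "\<forall>B. \<exists>n. \<rho> n > B"
    using g unfolding growth_function_def by auto
  define A where "A = Aset h \<rho>"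
  define e where "e = (\<lambda>(N::nat) (n::nat). LEAST l. (2^N + 1) - \<rho> l = 0)"
  have q0: "\<bar>T s - rat_dec (h [str_enc s, 2])\<bar> \<le> 1/4" for s using happ[of s 2] by (simp add: power2_eq_square)
  have q: "T s \<ge> rat_dec (h [str_enc s, 2]) - 1/4" "T s \<le> rat_dec (h [str_enc s, 2]) + 1/4" for s
    using q0[of s] unfolding abs_le_iff by auto
  have TA: "T s \<ge> 2^n" if "s \<in> sect A n" for s n
  proof -
    have "(n, s) \<in> Aset h \<rho>" using that by (simp add: sect_def A_def)
    note b = Aset_bound[OF this]
    have "real (2^n + 1) \<le> real (\<rho> (length s))" using b(1) by (simp only: of_nat_le_iff)
    then have "2^n + 1 \<le> real (\<rho> (length s))" by simp
    then show ?thesis using b(2) q(1)[of s] by linarith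
  qed
  have TA2: "T s \<ge> real (\<rho> (length s)) - 3/4" if "s \<in> sect A n" for s n
  proof -
    have "(n, s) \<in> Aset h \<rho>" using that by (simp add: sect_def A_def)
    note b = Aset_bound[OF this]
    then show ?thesis using b(2) q(1)[of s] by linarith
  qed
  have e_ex: "\<exists>l. (2^N + 1) - \<rho> l = 0" for N :: nat
  proof -
    obtain l where "\<rho> l > 2^N" using unb by blast
    then show ?thesis by (intro exI[of _ l]) simp
  qed
  have e_prop: "\<rho> l \<ge> 2^N + 1" if "l \<ge> e N n" for N n l
  proof -
    have "(2^N + 1) - \<rho> (e N n) = 0" unfolding e_def using LeastI_ex[OF e_ex[of N]] by simp
    then have "\<rho> (e N n) \<ge> 2^N + 1" by simp
    moreover have "\<rho> (e N n) \<le> \<rho> l" using mono that by (simp add: monoD)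
    ultimately show ?thesis by simp
  qed
  have test: "schnorr_test \<phi> A" unfolding schnorr_test_def
  proof (intro conjI allI)
    show "recursive_set A" unfolding A_def by (rule rec_Aset[OF h rr])
    fix n
    have "upper_prob \<phi> (cyl (sect A n)) \<le> ereal (1 / 2^n)"
      by (rule ville[OF assms(1) T _ _ order_refl]) (use TA in auto)
    then show "upper_prob \<phi> (cyl (sect A n)) \<le> ereal ((1/2)^n)" by (simp add: power_one_over)
  next
    show "\<exists>e. recursive_fn2 e \<and> (\<forall>N n l. e N n \<le> l \<longrightarrow>
        upper_prob \<phi> (cyl (sect A n) - cyl (sect_lt A n l)) \<le> ereal ((1/2)^N))"
    proof (intro exI conjI allI impI)
      show "recursive_fn2 e" unfolding e_def by (rule rec_e[OF rr unb])
      fix N n l assume l: "e N n \<le> l"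
      define S where "S = {s \<in> sect A n. length s \<ge> l}"
      have "cyl (sect A n) - cyl (sect_lt A n l) \<subseteq> cyl S"
      proof
        fix w assume "w \<in> cyl (sect A n) - cyl (sect_lt A n l)"
        then obtain s where s: "s \<in> sect A n" "pfx w (length s) = s" and nc: "w \<notin> cyl (sect_lt A n l)"
          unfolding cyl_def by auto
        have "\<not> length s < l"
        proof
          assume "length s < l"
          then have "s \<in> sect_lt A n l" using s by (simp add: sect_def sect_lt_def)
          then show False using nc s unfolding cyl_def by auto
        qed
        then show "w \<in> cyl S" using s unfolding cyl_def S_def by auto
      qed
      moreover have "T s \<ge> 2^N" if "s \<in> S" for s
      proof -
        have "\<rho> (length s) \<ge> 2^N + 1" using that l e_prop[of N n "length s"] unfolding S_def by auto
        then have "real (2^N + 1) \<le> real (\<rho> (length s))" by (simp only: of_nat_le_iff)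
        then have "real (\<rho> (length s)) \<ge> 2^N + 1" by simp
        then show ?thesis using TA2[of s n] that unfolding S_def by auto
      qed
      ultimately have "upper_prob \<phi> (cyl (sect A n) - cyl (sect_lt A n l)) \<le> ereal (1 / 2^N)"
        by (intro ville[OF assms(1) T, where S=S]) auto
      then show "upper_prob \<phi> (cyl (sect A n) - cyl (sect_lt A n l)) \<le> ereal ((1/2)^N)"
        by (simp add: power_one_over)
    qed
  qed
  have freq: "\<exists>m\<ge>K. T (pfx \<omega> m) > real (\<rho> m)" for K
  proof (rule ccontr)
    assume "\<not> (\<exists>m\<ge>K. T (pfx \<omega> m) > real (\<rho> m))"
    then have "eventually (\<lambda>m. ereal (T (pfx \<omega> m) - real (\<rho> m)) \<le> 0) sequentially"
      unfolding eventually_sequentially by (intro exI[of _ K]) auto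
    then have "limsup (\<lambda>n. ereal (T (pfx \<omega> n) - real (\<rho> n))) \<le> 0" by (rule Limsup_bounded)
    then show False using ls by simp
  qed
  have "\<omega> \<in> cyl (sect A n)" for n
  proof -
    obtain K where K: "\<rho> K > 2^n" using unb by blast
    obtain m where m: "m \<ge> K" "T (pfx \<omega> m) > real (\<rho> m)" using freq by blast
    have "\<rho> K \<le> \<rho> m" using mono m(1) by (simp add: monoD)
    then have rm: "\<rho> m \<ge> 2^n + 1" using K by simp
    have "rat_dec (h [str_enc (pfx \<omega> m), 2]) \<ge> real (\<rho> (length (pfx \<omega> m))) - 1/2"
      using q(2)[of "pfx \<omega> m"] m(2) by simp
    then have "(n, pfx \<omega> m) \<in> A" unfolding A_def
      using Aset_iff[where n=n and s="pfx \<omega> m" and \<rho>=\<rho> and h=h] rm by simp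
    then show ?thesis unfolding cyl_def sect_def by (intro CollectI bexI[of _ "pfx \<omega> m"]) auto
  qed
  then have "\<omega> \<in> (\<Inter>n. cyl (sect A n))" by blast
  then show False using assms(2) test unfolding schnorr_test_random_def by blast
qed

end
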